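(* Let $s\ge 1$, $q=2^s$, and let $k$ be an integer with $1\le k\le q/2$. Let $\beta\in\mathbb{F}_{q^2}$ be an element of multiplicative order $q+1$. Define $$g(X)=\prod_{i=\frac{q-k}{2}+1}^{\frac{q+k}{2}}(X-\beta^i)\quad\text{if $k$ is even},\qquad g(X)=\prod_{i=-\frac{k-1}{2}}^{\frac{k-1}{2}}(X-\beta^i)\quad\text{if $k$ is odd}.$$ Then $g(X)\in\mathbb{F}_q[X]$, $g$ is monic of degree $k$, $X^k g(X^{-1})=g(X)$, and, writing $g(X)=X^k+c_{k-1}X^{k-1}+\dots+c_1X+c_0$, the matrix $\mathsf{Companion}(c_0,\dots,c_{k-1})^k$ is MDS.
   Context: For $c_0,\dots,c_{k-1}\in\mathbb{F}_q$, $\mathsf{Companion}(c_0,\dots,c_{k-1})$ denotes the $k\times k$ matrix whose first $k-1$ rows are $e_2,e_3,\dots,e_k$ (ones on the superdiagonal, zeros elsewhere) and whose last row is $(c_0,c_1,\dots,c_{k-1})$. A linear code over $\mathbb{F}_q$ of length $n$ and dimension $k'$ is MDS if its minimal Hamming distance equals $n-k'+1$. A $k\times k$ matrix $M$ over $\mathbb{F}_q$ is called MDS if the $k\times 2k$ matrix $[I_k\mid M]$ generates an MDS code of length $2k$ and dimension $k$ (equivalently, minimal distance $k+1$). *)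

theory Defs
  imports "Jordan_Normal_Form.Matrix" "HOL-Computational_Algebra.Polynomial"
begin

definition hamming_dist :: "'a::zero vec \<Rightarrow> 'a vec \<Rightarrow> nat" where
  "hamming_dist c d = card {j. j < dim_vec c \<and> c $ j \<noteq> d $ j}"

definition lin_code :: "'a::field set \<Rightarrow> 'a mat \<Rightarrow> 'a vec set" where
  "lin_code F G = {vec (dim_col G) (\<lambda>j. \<Sum>i<dim_row G. x $ i * G $$ (i, j)) | x.
       x \<in> carrier_vec (dim_row G) \<and> (\<forall>i<dim_row G. x $ i \<in> F)}"

definition min_distance :: "'a::field set \<Rightarrow> 'a mat \<Rightarrow> nat" where
  "min_distance F G = Min {hamming_dist c d | c d. c \<in> lin_code F G \<and> d \<in> lin_code F G \<and> c \<noteq> d}"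

definition id_concat :: "nat \<Rightarrow> 'a::{zero,one} mat \<Rightarrow> 'a mat" where
  "id_concat k M = mat k (2 * k) (\<lambda>(i, j). if j < k then (if i = j then 1 else 0) else M $$ (i, j - k))"

text \<open>A k x k matrix M over F is MDS iff [I_k | M] generates an MDS code of length 2k and
  dimension k over F, i.e. its minimal distance is 2k - k + 1 = k + 1.\<close>
definition mds_matrix :: "'a::field set \<Rightarrow> nat \<Rightarrow> 'a mat \<Rightarrow> bool" where
  "mds_matrix F k M \<longleftrightarrow> M \<in> carrier_mat k k \<and> min_distance F (id_concat k M) = k + 1"

definition companion :: "nat \<Rightarrow> (nat \<Rightarrow> 'a::{zero,one}) \<Rightarrow> 'a mat" where
  "companion k c = mat k k (\<lambda>(i, j). if i + 1 < k then (if j = i + 1 then 1 else 0) else c j)"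

text \<open>The subfield F_q of a field of order q^2: the fixed points of x \<mapsto> x^q.\<close>
definition subfield_q :: "nat \<Rightarrow> 'a::field set" where
  "subfield_q q = {x. x ^ q = x}"

end

theory Submission
  imports Defs
begin

lemma fin_fermat:
  fixes a :: "'a::{field,finite}"
  assumes "a \<noteq> 0"
  shows "a ^ (card (UNIV::'a set) - 1) = 1"
proof -
  let ?S = "UNIV - {0::'a}"
  have inj: "inj_on (\<lambda>x. a * x) ?S" using assms by (auto simp: inj_on_def)
  have img: "(\<lambda>x. a * x) ` ?S = ?S"
  proof
    show "(\<lambda>x. a * x) ` ?S \<subseteq> ?S" using assms by auto
    show "?S \<subseteq> (\<lambda>x. a * x) ` ?S"
    proof
      fix y assume "y \<in> ?S"
      then have "y = a * (y / a)" "y / a \<in> ?S" using assms by auto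
      then show "y \<in> (\<lambda>x. a * x) ` ?S" by blast
    qed
  qed
  have "prod (\<lambda>x. x) ?S = prod (\<lambda>x. a * x) ?S"
    using prod.reindex[OF inj, of "\<lambda>x. x"] img by simp
  also have "\<dots> = a ^ card ?S * prod (\<lambda>x. x) ?S"
    by (simp add: prod.distrib)
  finally have "a ^ card ?S = 1"
    by (subgoal_tac "prod (\<lambda>x. x) ?S \<noteq> 0") auto
  moreover have "card ?S = card (UNIV::'a set) - 1"
    by (simp add: card_Diff_singleton)
  ultimately show ?thesis by simp
qed

lemma char2:
  assumes "card (UNIV :: 'a::{field,finite} set) = (2::nat) ^ n" "n \<ge> 1"
  shows "(1::'a) + 1 = 0"
proof -
  have "odd (card (UNIV :: 'a set) - 1)" using assms by (simp)
  then have "(-1::'a) ^ (card (UNIV :: 'a set) - 1) = -1" by simp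
  moreover have "(-1::'a) ^ (card (UNIV :: 'a set) - 1) = 1" by (rule fin_fermat) simp
  ultimately have "(-1::'a) = 1" by simp
  then show ?thesis by (metis add.inverse_inverse add_eq_0_iff)
qed

lemma frob2:
  fixes x y :: "'a::field"
  assumes "(1::'a) + 1 = 0"
  shows "(x + y) ^ (2 ^ s) = x ^ (2 ^ s) + y ^ (2 ^ s)"
proof (induction s)
  case 0 then show ?case by simp
next
  case (Suc s)
  have sq: "(u + v) ^ 2 = u ^ 2 + v ^ 2" for u v :: 'a
  proof -
    have "(u + v) ^ 2 = u^2 + v^2 + (1+1) * u * v" by (simp add: power2_eq_square algebra_simps)
    then show ?thesis using assms by simp
  qed
  have "(x + y) ^ (2 ^ Suc s) = ((x + y) ^ (2 ^ s)) ^ 2" by (simp add: power_mult[symmetric] mult.commute)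
  also have "\<dots> = (x ^ (2 ^ s)) ^ 2 + (y ^ (2 ^ s)) ^ 2" using Suc sq by simp
  also have "\<dots> = x ^ (2 ^ Suc s) + y ^ (2 ^ Suc s)" by (simp add: power_mult[symmetric] mult.commute)
  finally show ?case .
qed


lemma sum_hom:
  assumes "\<And>x y. f (x + y) = f x + f y" "f 0 = 0"
  shows "f (sum h A) = sum (\<lambda>i. f (h i)) A"
  by (induction A rule: infinite_finite_induct) (auto simp: assms)

lemma map_poly_mult_hom:
  fixes f :: "'a::field \<Rightarrow> 'a"
  assumes "\<And>x y. f (x + y) = f x + f y" "\<And>x y. f (x * y) = f x * f y" "f 0 = 0"
  shows "map_poly f (p * r) = map_poly f p * map_poly f r"
  by (rule poly_eqI) (simp add: coeff_map_poly assms coeff_mult sum_hom[of f, OF assms(1,3)])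

lemma map_poly_prod_hom:
  fixes f :: "'a::field \<Rightarrow> 'a"
  assumes "\<And>x y. f (x + y) = f x + f y" "\<And>x y. f (x * y) = f x * f y" "f 0 = 0" "f 1 = 1"
  shows "map_poly f (prod h A) = prod (\<lambda>i. map_poly f (h i)) A"
proof (induction A rule: infinite_finite_induct)
  case (infinite A) then show ?case by (simp add: map_poly_def assms)
next
  case empty then show ?case by (simp add: map_poly_def assms)
next
  case (insert x F) then show ?case by (simp add: map_poly_mult_hom[OF assms(1-3)])
qed

lemma g_props:
  fixes \<beta> :: "'a::{field,finite}" and g :: "'a poly"
  assumes char: "(1::'a) + 1 = 0" and q: "q = 2 ^ s" and s: "s \<ge> 1" and bq: "\<beta> ^ (q + 1) = 1"
    and gdef: "g = (\<Prod>i\<in>{a..a + int k - 1}. [:- (\<beta> powi i), 1:])"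
    and cc: "\<beta> powi cc = 1" "\<And>i. i \<in> {a..a + int k - 1} \<Longrightarrow> cc - i \<in> {a..a + int k - 1}"
  shows "\<forall>i. coeff g i ^ q = coeff g i" "lead_coeff g = 1" "degree g = k"
    "\<forall>i\<le>k. coeff g (k - i) = coeff g i"
proof -
  define I where "I = {a..a + int k - 1}"
  have b0: "\<beta> \<noteq> 0"
  proof
    assume "\<beta> = 0" with bq show False by simp
  qed
  have cardI: "card I = k" unfolding I_def by simp
  have finI: "finite I" unfolding I_def by simp
  have cI: "\<And>i. i \<in> I \<Longrightarrow> cc - i \<in> I" using cc(2) unfolding I_def by blast
  have g: "g = (\<Prod>i\<in>I. [:- (\<beta> powi i), 1:])" using gdef I_def by simp
  have reidx: "(\<Prod>i\<in>I. h (cc - i)) = (\<Prod>i\<in>I. h i)" for h :: "int \<Rightarrow> 'a poly"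
    by (rule prod.reindex_bij_witness[where i="\<lambda>x. cc - x" and j="\<lambda>x. cc - x"]) (simp_all add: cI)
  show deg: "degree g = k" unfolding g
    by (subst degree_prod_sum_eq) (auto simp: cardI)
  show lc: "lead_coeff g = 1" unfolding g lead_coeff_prod by simp
  define \<phi> where "\<phi> = (\<lambda>x::'a. x ^ q)"
  have ph_add: "\<phi> (x + y) = \<phi> x + \<phi> y" for x y unfolding \<phi>_def q by (rule frob2[OF char])
  have ph_mult: "\<phi> (x * y) = \<phi> x * \<phi> y" for x y unfolding \<phi>_def by (simp add: power_mult_distrib)
  have ph0: "\<phi> 0 = 0" "\<phi> 1 = 1" unfolding \<phi>_def q by auto
  have mone: "-(x::'a) = x" for x
  proof -
    have "x + x = (1+1)*x" by (simp add: distrib_right)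
    then have "x + x = 0" using char by simp
    then show ?thesis by (metis eq_neg_iff_add_eq_0)
  qed
  have bpow1: "\<beta> powi (int (q+1) * j) = 1" for j
  proof -
    have "\<beta> powi int (q+1) = 1" using bq by (simp only: power_int_of_nat)
    then show ?thesis by (simp only: power_int_mult power_int_1_left)
  qed
  have bneg: "\<beta> powi (-i) = \<beta> powi (cc - i)" for i
    using cc(1) b0 by (simp add: power_int_diff power_int_minus inverse_eq_divide)
  have ph_root: "\<phi> (\<beta> powi i) = \<beta> powi (cc - i)" for i
  proof -
    have "\<phi> (\<beta> powi i) = (\<beta> powi i) powi (int q)" unfolding \<phi>_def by (simp only: power_int_of_nat)
    also have "\<dots> = \<beta> powi (i * int q)" by (simp only: power_int_mult)
    also have "i * int q = int q * i" by simp
    also have "int q * i = int (q+1) * i + (- i)" by (simp add: algebra_simps)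
    also have "\<beta> powi \<dots> = \<beta> powi (int (q+1) * i) * \<beta> powi (-i)"
      by (rule power_int_add) (simp add: b0)
    also have "\<dots> = \<beta> powi (-i)" by (simp only: bpow1 mult_1)
    finally show ?thesis using bneg by simp
  qed
  have mapg: "map_poly \<phi> g = g"
  proof -
    have "map_poly \<phi> g = (\<Prod>i\<in>I. map_poly \<phi> [:- (\<beta> powi i), 1:])"
      unfolding g by (rule map_poly_prod_hom[OF ph_add ph_mult ph0])
    also have "\<dots> = (\<Prod>i\<in>I. [:- (\<beta> powi (cc - i)), 1:])"
      by (rule prod.cong) (simp_all add: map_poly_pCons ph0 ph_root mone)
    also have "\<dots> = g" unfolding g by (rule reidx[of "\<lambda>i. [:- (\<beta> powi i), 1:]"])
    finally show ?thesis .
  qed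
  show "\<forall>i. coeff g i ^ q = coeff g i"
  proof
    fix i
    have "coeff g i ^ q = coeff (map_poly \<phi> g) i"
      using coeff_map_poly[of \<phi> g i, OF ph0(1)] by (simp add: \<phi>_def)
    then show "coeff g i ^ q = coeff g i" using mapg by simp
  qed
  define P where "P = (\<Prod>i\<in>I. - (\<beta> powi i))"
  have refl1: "reflect_poly [:- r, 1:] = smult (- r) [:- (inverse r), 1:]" if "r \<noteq> 0" for r :: 'a
    using that apply (simp add: reflect_poly_pCons')
    apply (rule poly_eqI)
    apply (simp add: coeff_pCons coeff_monom split: nat.split)
    done
  have "reflect_poly g = (\<Prod>i\<in>I. smult (- (\<beta> powi i)) [:- (inverse (\<beta> powi i)), 1:])"
    unfolding g reflect_poly_prod by (rule prod.cong) (simp_all add: refl1 b0)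
  also have "\<dots> = smult P (\<Prod>i\<in>I. [:- (\<beta> powi (cc - i)), 1:])"
    unfolding prod_smult P_def using bneg b0 by (simp add: power_int_minus)
  also have "(\<Prod>i\<in>I. [:- (\<beta> powi (cc - i)), 1:]) = g" unfolding g by (rule reidx[of "\<lambda>i. [:- (\<beta> powi i), 1:]"])
  finally have rg: "reflect_poly g = smult P g" .
  have c0: "coeff g 0 = P" unfolding P_def g by (simp add: poly_0_coeff_0[symmetric] poly_prod)
  have "coeff (reflect_poly g) 0 = 1" using lc by (simp add: coeff_reflect_poly)
  then have "P * P = 1" using rg c0 by simp
  then have "(P + 1) * (P + 1) = 0" using char by (simp add: algebra_simps)
  then have P1: "P = 1" using mone by (metis add.right_inverse mult_eq_0_iff eq_neg_iff_add_eq_0)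
  show "\<forall>i\<le>k. coeff g (k - i) = coeff g i"
  proof (intro allI impI)
    fix i assume "i \<le> k"
    then have "coeff (reflect_poly g) i = coeff g (k - i)" using deg by (simp add: coeff_reflect_poly)
    then show "coeff g (k - i) = coeff g i" using rg P1 by simp
  qed
qed


lemma sum_shift_delta:
  fixes f :: "nat \<Rightarrow> 'a::semiring_1"
  assumes "j < k"
  shows "(\<Sum>l\<in>{0..<k - 1}. f l * (if j = l + 1 then 1 else 0)) = (if j = 0 then 0 else f (j - 1))"
proof -
  have "(\<Sum>l\<in>{0..<k - 1}. f l * (if j = l + 1 then 1 else 0)) = (\<Sum>l\<in>{0..<k - 1}. if l = j - 1 \<and> j \<noteq> 0 then f l else 0)"
    by (rule sum.cong) auto
  also have "\<dots> = (if j = 0 then 0 else f (j - 1))"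
    using assms by (cases "j = 0") (auto simp: sum.delta)
  finally show ?thesis .
qed

lemma comp_step:
  fixes A :: "'a::field mat"
  assumes "i < k" "j < k" "A \<in> carrier_mat k k"
  shows "(A * companion k c) $$ (i,j) = (if j = 0 then 0 else A $$ (i,j-1)) + A $$ (i,k-1) * c j"
proof -
  have ck: "companion k c \<in> carrier_mat k k" unfolding companion_def by simp
  have "(A * companion k c) $$ (i,j) = (\<Sum>l\<in>{0..<k}. A $$ (i,l) * (if l + 1 < k then (if j = l + 1 then 1 else 0) else c j))"
    using assms ck by (simp add: scalar_prod_def companion_def)
  also have "{0..<k} = insert (k - 1) {0..<k - 1}" using assms by auto
  also have "(\<Sum>l\<in>insert (k - 1) {0..<k - 1}. A $$ (i,l) * (if l + 1 < k then (if j = l + 1 then 1 else 0) else c j))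
     = A $$ (i,k-1) * c j + (\<Sum>l\<in>{0..<k - 1}. A $$ (i,l) * (if j = l + 1 then 1 else 0))"
    using assms apply simp apply (rule sum.cong) apply auto done
  also have "(\<Sum>l\<in>{0..<k - 1}. A $$ (i,l) * (if j = l + 1 then 1 else 0)) = (if j = 0 then 0 else A $$ (i,j-1))"
    by (rule sum_shift_delta[OF assms(2)])
  finally show ?thesis by simp
qed

lemma mod_X_step:
  fixes g P :: "'a::field poly"
  assumes "degree g = k" "lead_coeff g = 1" "k \<ge> 1" "degree P < k"
  shows "(pCons 0 P) mod g = pCons 0 P - smult (coeff P (k - 1)) g"
proof -
  define R where "R = pCons 0 P - smult (coeff P (k - 1)) g"
  have "degree (pCons 0 P) \<le> Suc (degree P)" by (rule degree_pCons_le)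
  then have "degree (pCons 0 P) \<le> k" using assms(4) by linarith
  then have dR: "degree R \<le> k" unfolding R_def using assms
    using degree_diff_le[of "pCons 0 P" k "smult (coeff P (k - 1)) g"] degree_smult_le[of "coeff P (k - 1)" g]
    by linarith
  have "coeff R k = 0" unfolding R_def using assms by (cases k) auto
  moreover have "degree R \<noteq> k"
  proof
    assume h: "degree R = k"
    then have "R \<noteq> 0" using assms(3) by auto
    then have "lead_coeff R \<noteq> 0" by simp
    then show False using h \<open>coeff R k = 0\<close> by simp
  qed
  ultimately have "degree R < k" using dR by linarith
  then have "R mod g = R" using assms by (simp add: mod_poly_less)
  moreover have "(pCons 0 P) mod g = R mod g"
    unfolding mod_eq_dvd_iff R_def by (simp add: dvd_smult)
  ultimately show ?thesis unfolding R_def by simp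
qed


lemma char2_neg:
  assumes "(1::'a::ring_1) + 1 = 0"
  shows "- (x::'a) = x"
proof -
  have "x + x = (1+1)*x" by (simp only: distrib_right mult_1)
  then have "x + x = 0" using assms by simp
  then show ?thesis by (metis eq_neg_iff_add_eq_0)
qed

lemma char2_diff:
  assumes "(1::'a::ring_1) + 1 = 0"
  shows "(x::'a) - y = x + y"
  using char2_neg[OF assms, of y] by (metis diff_conv_add_uminus)

lemma mod_deg_less:
  fixes g p :: "'a::field poly"
  assumes "degree g = k" "k \<ge> 1"
  shows "degree (p mod g) < k"
proof -
  have "g \<noteq> 0" using assms by auto
  then show ?thesis using degree_mod_less[of g p] assms by auto
qed

lemma comp_pow:
  fixes g :: "'a::field poly"
  assumes dg: "degree g = k" and lc: "lead_coeff g = 1" and k1: "k \<ge> 1" and char: "(1::'a) + 1 = 0"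
  shows "i < k \<Longrightarrow> j < k \<Longrightarrow> (companion k (\<lambda>i. coeff g i) ^\<^sub>m n) $$ (i,j) = coeff (monom 1 (n+i) mod g) j"
proof (induction n arbitrary: j)
  case 0
  have "monom 1 i mod g = monom 1 i" using 0 dg by (simp add: mod_poly_less degree_monom_eq)
  then show ?case using 0 by (simp add: companion_def coeff_monom)
next
  case (Suc n)
  define C where "C = companion k (\<lambda>i. coeff g i)"
  have ck: "C \<in> carrier_mat k k" unfolding companion_def C_def by simp
  define Pn where "Pn = monom 1 (n+i) mod g"
  have dP: "degree Pn < k" unfolding Pn_def by (rule mod_deg_less[OF dg k1])
  have "monom 1 (Suc n + i) mod g = ([:0,1:] * monom 1 (n+i)) mod g"
    by (simp add: monom_Suc)
  also have "\<dots> = ([:0,1:] * (monom 1 (n+i) mod g)) mod g" by (simp only: mod_mult_right_eq)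
  also have "\<dots> = pCons 0 Pn mod g" unfolding Pn_def by simp
  also have "\<dots> = pCons 0 Pn - smult (coeff Pn (k - 1)) g"
    using mod_X_step[OF dg lc k1 dP] by simp
  finally have eq: "monom 1 (Suc n + i) mod g = pCons 0 Pn - smult (coeff Pn (k - 1)) g" .
  have "(C ^\<^sub>m Suc n) $$ (i,j) = (C ^\<^sub>m n * C) $$ (i,j)" by simp
  also have "\<dots> = (if j = 0 then 0 else (C ^\<^sub>m n) $$ (i,j-1)) + (C ^\<^sub>m n) $$ (i,k-1) * coeff g j"
    unfolding C_def by (rule comp_step) (use Suc.prems ck C_def in auto)
  also have "\<dots> = (if j = 0 then 0 else coeff Pn (j-1)) + coeff Pn (k-1) * coeff g j"
    using Suc.IH Suc.prems k1 unfolding C_def Pn_def by auto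
  also have "\<dots> = coeff (pCons 0 Pn - smult (coeff Pn (k - 1)) g) j"
    by (cases j) (simp_all add: char2_diff[OF char])
  finally show ?case unfolding C_def eq .
qed


lemma bch:
  fixes Q :: "'a::field poly" and b z :: 'a
  assumes Q0: "Q \<noteq> 0" and b0: "b \<noteq> 0" and inj: "inj_on (\<lambda>j. z ^ j) {..degree Q}"
    and roots: "\<And>t. t < w0 \<Longrightarrow> poly Q (b * z ^ t) = 0"
  shows "card {j. j \<le> degree Q \<and> coeff Q j \<noteq> 0} \<ge> w0 + 1"
proof (rule ccontr)
  define S where "S = {j. j \<le> degree Q \<and> coeff Q j \<noteq> 0}"
  assume "\<not> card {j. j \<le> degree Q \<and> coeff Q j \<noteq> 0} \<ge> w0 + 1"
  then have cS: "card S \<le> w0" unfolding S_def by simp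
  have finS: "finite S" unfolding S_def by simp
  have Ssub: "S \<subseteq> {..degree Q}" unfolding S_def by auto
  define y where "y j = coeff Q j * b ^ j" for j
  have key: "(\<Sum>j\<in>S. y j * (z ^ j) ^ t) = 0" if "t < card S" for t
  proof -
    have "poly Q (b * z ^ t) = (\<Sum>j\<le>degree Q. coeff Q j * (b * z ^ t) ^ j)" by (rule poly_altdef)
    also have "\<dots> = (\<Sum>j\<in>S. coeff Q j * (b * z ^ t) ^ j)"
      by (rule sum.mono_neutral_right) (auto simp: S_def)
    also have "\<dots> = (\<Sum>j\<in>S. y j * (z ^ j) ^ t)"
      by (rule sum.cong) (simp_all add: y_def power_mult_distrib power_mult[symmetric] mult.commute mult.left_commute)
    finally show ?thesis using roots[of t] that cS by simp
  qed
  have lin: "(\<Sum>j\<in>S. y j * poly p (z ^ j)) = 0" if "degree p < card S" for p :: "'a poly"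
  proof -
    have "(\<Sum>j\<in>S. y j * poly p (z ^ j)) = (\<Sum>j\<in>S. \<Sum>t\<le>degree p. coeff p t * (y j * (z ^ j) ^ t))"
      by (simp add: poly_altdef sum_distrib_left mult.commute mult.left_commute)
    also have "\<dots> = (\<Sum>t\<le>degree p. coeff p t * (\<Sum>j\<in>S. y j * (z ^ j) ^ t))"
      by (subst sum.swap) (simp add: sum_distrib_left)
    also have "\<dots> = 0" using key that by simp
    finally show ?thesis .
  qed
  have j0S: "degree Q \<in> S" unfolding S_def using Q0 by simp
  define j0 where "j0 = degree Q"
  define p where "p = (\<Prod>m\<in>S - {j0}. [:- (z ^ m), 1:])"
  have "degree p = card (S - {j0})" unfolding p_def
    by (subst degree_prod_sum_eq) auto
  also have "\<dots> = card S - 1" using j0S finS j0_def by simp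
  also have "\<dots> < card S" proof -
    have "card S > 0" using j0S finS card_gt_0_iff by blast
    then show ?thesis by simp
  qed
  finally have "(\<Sum>j\<in>S. y j * poly p (z ^ j)) = 0" by (rule lin)
  moreover have "(\<Sum>j\<in>S. y j * poly p (z ^ j)) = y j0 * poly p (z ^ j0) + (\<Sum>j\<in>S - {j0}. y j * poly p (z ^ j))"
    using finS j0S j0_def by (simp add: sum.remove)
  moreover have "(\<Sum>j\<in>S - {j0}. y j * poly p (z ^ j)) = 0"
  proof (rule sum.neutral, rule ballI)
    fix j assume j: "j \<in> S - {j0}"
    have "poly p (z ^ j) = (\<Prod>m\<in>S - {j0}. z ^ j - z ^ m)" unfolding p_def by (simp add: poly_prod)
    also have "\<dots> = 0" using j finS by (intro prod_zero) auto
    finally show "y j * poly p (z ^ j) = 0" by simp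
  qed
  moreover have "poly p (z ^ j0) \<noteq> 0"
  proof -
    have "poly p (z ^ j0) = (\<Prod>m\<in>S - {j0}. z ^ j0 - z ^ m)" unfolding p_def by (simp add: poly_prod)
    moreover have "z ^ j0 - z ^ m \<noteq> 0" if "m \<in> S - {j0}" for m
    proof
      assume "z ^ j0 - z ^ m = 0"
      then have "z ^ j0 = z ^ m" by simp
      moreover have "j0 \<in> {..degree Q}" "m \<in> {..degree Q}" using that Ssub j0_def by auto
      ultimately have "j0 = m" using inj by (auto dest: inj_onD)
      then show False using that by simp
    qed
    ultimately show ?thesis using finS by simp
  qed
  moreover have "y j0 \<noteq> 0" unfolding y_def j0_def using Q0 b0 by simp
  ultimately show False by simp
qed


lemma cw_weight:
  fixes g :: "'a::field poly" and z :: "nat \<Rightarrow> 'a" and b \<beta> :: 'a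
  assumes dg: "degree g = k" and lc: "lead_coeff g = 1" and k1: "k \<ge> 1" and char: "(1::'a) + 1 = 0"
    and inj: "inj_on (\<lambda>j. \<beta> ^ j) {..<2*k}" and b0: "b \<noteq> 0"
    and roots: "\<And>t. t < k \<Longrightarrow> poly g (b * \<beta> ^ t) = 0"
    and z: "i0 < k" "z i0 \<noteq> 0"
  shows "card {j. j < 2*k \<and> (\<Sum>i<k. z i * id_concat k (companion k (\<lambda>i. coeff g i) ^\<^sub>m k) $$ (i,j)) \<noteq> 0} \<ge> k + 1"
proof -
  define M where "M = companion k (\<lambda>i. coeff g i) ^\<^sub>m k"
  define R where "R i = monom 1 (k+i) mod g" for i
  define W where "W = (\<Sum>i<k. smult (z i) (R i))"
  define Q where "Q = (\<Sum>i<k. smult (z i) (monom 1 (k+i) - R i))"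
  define cw where "cw j = (\<Sum>i<k. z i * id_concat k M $$ (i,j))" for j
  have dR: "degree (R i) < k" for i unfolding R_def by (rule mod_deg_less[OF dg k1])
  have cR: "coeff (R i) j = 0" if "j \<ge> k" for i j using dR[of i] that by (simp add: coeff_eq_0)
  have Mij: "M $$ (i,j) = coeff (R i) j" if "i < k" "j < k" for i j
    unfolding M_def R_def using comp_pow[OF dg lc k1 char that] by simp
  have cw1: "cw j = z j" if "j < k" for j
  proof -
    have "cw j = (\<Sum>i<k. z i * (if i = j then 1 else 0))"
      unfolding cw_def id_concat_def using that by (intro sum.cong) auto
    also have "\<dots> = (\<Sum>i<k. if i = j then z i else 0)" by (rule sum.cong) auto
    also have "\<dots> = z j" using that by (simp add: sum.delta)
    finally show ?thesis .
  qed
  have cw2: "cw j = coeff W (j - k)" if "k \<le> j" "j < 2*k" for j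
  proof -
    have "cw j = (\<Sum>i<k. z i * coeff (R i) (j - k))"
      unfolding cw_def id_concat_def using that Mij by (intro sum.cong) auto
    also have "\<dots> = coeff W (j - k)" unfolding W_def by (simp add: coeff_sum)
    finally show ?thesis .
  qed
  have cQ1: "coeff Q j = - coeff W j" if "j < k" for j
    unfolding Q_def W_def using that by (simp add: coeff_sum sum_negf algebra_simps coeff_monom)
  have cQ2: "coeff Q j = (if j < 2*k then z (j - k) else 0)" if "k \<le> j" for j
  proof -
    have "coeff Q j = (\<Sum>i<k. z i * (if k + i = j then 1 else 0))"
      unfolding Q_def coeff_sum using that cR by (intro sum.cong) (auto simp: coeff_monom)
    also have "\<dots> = (\<Sum>i<k. if i = j - k then z i else 0)"
      using that by (intro sum.cong) auto
    also have "\<dots> = (if j < 2*k then z (j - k) else 0)" using that by (simp add: sum.delta) linarith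
    finally show ?thesis .
  qed
  have Q0: "Q \<noteq> 0"
  proof
    assume "Q = 0"
    then have "coeff Q (k + i0) = 0" by simp
    then show False using cQ2[of "k + i0"] z by simp
  qed
  have dQ: "degree Q < 2*k"
  proof (rule ccontr)
    assume "\<not> degree Q < 2*k"
    then have "coeff Q (degree Q) = 0" using cQ2[of "degree Q"] by simp
    then show False using Q0 by simp
  qed
  have gQ: "g dvd Q" unfolding Q_def R_def
    by (intro dvd_sum dvd_smult) (simp add: minus_mod_eq_mult_div)
  have rootsQ: "poly Q (b * \<beta> ^ t) = 0" if "t < k" for t
    using gQ roots[OF that] by (metis dvdE mult_eq_0_iff poly_mult)
  have injQ: "inj_on (\<lambda>j. \<beta> ^ j) {..degree Q}"
    by (rule inj_on_subset[OF inj]) (use dQ in auto)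
  have bc: "card {j. j \<le> degree Q \<and> coeff Q j \<noteq> 0} \<ge> k + 1"
    by (rule bch[OF Q0 b0 injQ rootsQ])
  define U where "U = {j. j \<le> degree Q \<and> coeff Q j \<noteq> 0}"
  define T where "T = {j. j < 2*k \<and> cw j \<noteq> 0}"
  define f where "f j = (if j < k then j + k else j - k)" for j
  have "U \<subseteq> f ` T"
  proof
    fix u assume u: "u \<in> U"
    then have u2: "u < 2*k" unfolding U_def using dQ by auto
    show "u \<in> f ` T"
    proof (cases "u < k")
      case True
      have "cw (u + k) \<noteq> 0" using u True cQ1 cw2[of "u+k"] unfolding U_def by auto
      then have "u + k \<in> T" unfolding T_def using True by auto
      moreover have "f (u + k) = u" unfolding f_def by simp
      ultimately show ?thesis by force
    next
      case False
      have "cw (u - k) \<noteq> 0" using u False u2 cQ2[of u] cw1[of "u-k"] unfolding U_def by auto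
      then have "u - k \<in> T" unfolding T_def using False u2 by auto
      moreover have "f (u - k) = u" unfolding f_def using False u2 by simp
      ultimately show ?thesis by force
    qed
  qed
  then have "card U \<le> card (f ` T)" by (rule card_mono[rotated]) (simp add: T_def)
  also have "\<dots> \<le> card T" by (rule card_image_le) (simp add: T_def)
  finally have "card T \<ge> k + 1" using bc unfolding U_def by simp
  then show ?thesis unfolding T_def cw_def M_def .
qed


lemma sum_delta0:
  fixes f :: "nat \<Rightarrow> 'a::semiring_1"
  assumes "k \<ge> 1"
  shows "(\<Sum>i<k. (if i = 0 then 1 else 0) * f i) = f 0"
proof -
  have "(\<Sum>i<k. (if i = 0 then 1 else 0) * f i) = (\<Sum>i<k. if i = 0 then f i else 0)"
    by (rule sum.cong) auto
  also have "\<dots> = f 0" using assms by (simp add: sum.delta)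
  finally show ?thesis .
qed

lemma mds_part:
  fixes g :: "'a::field poly" and b \<beta> :: 'a and F :: "'a set"
  assumes dg: "degree g = k" and lc: "lead_coeff g = 1" and k1: "k \<ge> 1" and char: "(1::'a) + 1 = 0"
    and inj: "inj_on (\<lambda>j. \<beta> ^ j) {..<2*k}" and b0: "b \<noteq> 0"
    and roots: "\<And>t. t < k \<Longrightarrow> poly g (b * \<beta> ^ t) = 0"
    and F01: "0 \<in> F" "1 \<in> F"
  shows "mds_matrix F k (companion k (\<lambda>i. coeff g i) ^\<^sub>m k)"
proof -
  define M where "M = companion k (\<lambda>i. coeff g i) ^\<^sub>m k"
  define G where "G = id_concat k M"
  have Mc: "M \<in> carrier_mat k k" unfolding M_def companion_def by (intro pow_carrier_mat) simp
  have dG: "dim_row G = k" "dim_col G = 2*k" unfolding G_def id_concat_def by auto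
  define cwv where "cwv x = vec (2*k) (\<lambda>j. \<Sum>i<k. x $ i * G $$ (i, j))" for x :: "'a vec"
  have LC: "lin_code F G = {cwv x | x. x \<in> carrier_vec k \<and> (\<forall>i<k. x $ i \<in> F)}"
    unfolding lin_code_def cwv_def dG by simp
  define D where "D = {hamming_dist c d | c d. c \<in> lin_code F G \<and> d \<in> lin_code F G \<and> c \<noteq> d}"
  have lb: "hamming_dist (cwv x) (cwv y) \<ge> k + 1" if "cwv x \<noteq> cwv y" for x y
  proof -
    have "\<exists>i0<k. x $ i0 \<noteq> y $ i0"
    proof (rule ccontr)
      assume "\<not> (\<exists>i0<k. x $ i0 \<noteq> y $ i0)"
      then have "\<forall>i<k. x $ i = y $ i" by simp
      then have "cwv x = cwv y" unfolding cwv_def by (intro eq_vecI) simp_all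
      then show False using that by simp
    qed
    then obtain i0 where i0: "i0 < k" "x $ i0 \<noteq> y $ i0" by blast
    have dif: "cwv x $ j - cwv y $ j = (\<Sum>i<k. (x $ i - y $ i) * G $$ (i,j))" if "j < 2*k" for j
      unfolding cwv_def using that by (simp add: left_diff_distrib sum_subtractf)
    have eq: "{j. j < dim_vec (cwv x) \<and> cwv x $ j \<noteq> cwv y $ j}
       = {j. j < 2*k \<and> (\<Sum>i<k. (x $ i - y $ i) * G $$ (i,j)) \<noteq> 0}"
    proof (rule Collect_cong)
      fix j
      have dv: "dim_vec (cwv x) = 2*k" unfolding cwv_def by simp
      show "(j < dim_vec (cwv x) \<and> cwv x $ j \<noteq> cwv y $ j) = (j < 2*k \<and> (\<Sum>i<k. (x $ i - y $ i) * G $$ (i,j)) \<noteq> 0)"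
        unfolding dv using dif[of j] by (metis right_minus_eq)
    qed
    have "card {j. j < 2*k \<and> (\<Sum>i<k. (x $ i - y $ i) * G $$ (i,j)) \<noteq> 0} \<ge> k + 1"
      unfolding G_def M_def
      by (rule cw_weight[OF dg lc k1 char inj b0 roots, of i0 "\<lambda>i. x $ i - y $ i"]) (use i0 in auto)
    then show ?thesis unfolding hamming_dist_def eq .
  qed
  define e where "e = vec k (\<lambda>i. if i = 0 then (1::'a) else 0)"
  have ce: "cwv e \<in> lin_code F G" unfolding LC e_def using F01 by auto
  have c0: "cwv (0\<^sub>v k) \<in> lin_code F G" unfolding LC using F01 by auto
  have e0: "cwv e $ 0 = 1"
  proof -
    have "cwv e $ 0 = (\<Sum>i<k. (if i = 0 then 1 else 0) * G $$ (i, 0))"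
      unfolding cwv_def e_def using k1 by (simp)
    also have "\<dots> = G $$ (0,0)" using k1 by (rule sum_delta0)
    also have "\<dots> = 1" unfolding G_def id_concat_def using k1 by simp
    finally show ?thesis .
  qed
  have z0: "cwv (0\<^sub>v k) = 0\<^sub>v (2*k)" unfolding cwv_def by (intro eq_vecI) auto
  have ne: "cwv e \<noteq> cwv (0\<^sub>v k)"
  proof
    assume "cwv e = cwv (0\<^sub>v k)"
    then have "cwv e $ 0 = 0" using z0 k1 by simp
    then show False using e0 by simp
  qed
  have ub: "hamming_dist (cwv e) (cwv (0\<^sub>v k)) \<le> k + 1"
  proof -
    have "{j. j < dim_vec (cwv e) \<and> cwv e $ j \<noteq> cwv (0\<^sub>v k) $ j} \<subseteq> insert 0 {k..<2*k}"
    proof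
      fix j assume j: "j \<in> {j. j < dim_vec (cwv e) \<and> cwv e $ j \<noteq> cwv (0\<^sub>v k) $ j}"
      show "j \<in> insert 0 {k..<2*k}"
      proof (rule ccontr)
        assume nj: "j \<notin> insert 0 {k..<2*k}"
        have jk: "j < 2*k" using j unfolding cwv_def by simp
        then have jk': "j < k" "j \<noteq> 0" using nj by auto
        have "cwv e $ j = (\<Sum>i<k. (if i = 0 then 1 else 0) * G $$ (i, j))"
          unfolding cwv_def e_def using jk by simp
        also have "\<dots> = G $$ (0,j)" using k1 by (rule sum_delta0)
        also have "\<dots> = 0" unfolding G_def id_concat_def using jk jk' k1 by simp
        finally show False using j z0 jk by simp
      qed
    qed
    then have "card {j. j < dim_vec (cwv e) \<and> cwv e $ j \<noteq> cwv (0\<^sub>v k) $ j} \<le> card (insert 0 {k..<2*k})"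
      by (rule card_mono[rotated]) simp
    also have "\<dots> \<le> k + 1" by (simp add: card_insert_if)
    finally show ?thesis unfolding hamming_dist_def .
  qed
  have inD: "k + 1 \<in> D"
  proof -
    have "hamming_dist (cwv e) (cwv (0\<^sub>v k)) = k + 1" using lb[OF ne] ub by simp
    then have "k + 1 = hamming_dist (cwv e) (cwv (0\<^sub>v k)) \<and> cwv e \<in> lin_code F G \<and> cwv (0\<^sub>v k) \<in> lin_code F G \<and> cwv e \<noteq> cwv (0\<^sub>v k)"
      using ce c0 ne by simp
    then show ?thesis unfolding D_def by blast
  qed
  have allD: "k + 1 \<le> d" if dD: "d \<in> D" for d
  proof -
    obtain c c' where cc: "d = hamming_dist c c'" "c \<in> lin_code F G" "c' \<in> lin_code F G" "c \<noteq> c'"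
      using dD unfolding D_def by blast
    obtain x where x: "c = cwv x" using cc(2) unfolding LC by blast
    obtain y where y: "c' = cwv y" using cc(3) unfolding LC by blast
    show ?thesis using lb[of x y] cc x y by simp
  qed
  have finD: "finite D"
  proof -
    have "D \<subseteq> {..2*k}"
    proof
      fix d assume "d \<in> D"
      then obtain c c' where dd: "d = hamming_dist c c'" "c \<in> lin_code F G" unfolding D_def by blast
      then obtain x where "c = cwv x" unfolding LC by blast
      then have "dim_vec c = 2*k" unfolding cwv_def by simp
      then have "d \<le> card {..<2*k}" unfolding dd hamming_dist_def by (intro card_mono) auto
      then show "d \<in> {..2*k}" by simp
    qed
    then show ?thesis by (rule finite_subset) simp
  qed
  have "min_distance F G = k + 1" unfolding min_distance_def D_def[symmetric]
    by (rule Min_eqI[OF finD allD inD])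
  then show ?thesis unfolding mds_matrix_def G_def M_def using Mc M_def by simp
qed


lemma main_generic:
  fixes s k q :: nat and \<beta> :: "'a::{field,finite}" and g :: "'a poly" and a cc :: int
  assumes "s \<ge> 1" and q: "q = 2 ^ s"
    and card: "card (UNIV :: 'a set) = q ^ 2"
    and k1: "1 \<le> k" and kq: "2 * k \<le> q"
    and bq: "\<beta> ^ (q + 1) = 1" and ord: "\<forall>n. 0 < n \<and> n < q + 1 \<longrightarrow> \<beta> ^ n \<noteq> 1"
    and gdef: "g = (\<Prod>i\<in>{a..a + int k - 1}. [:- (\<beta> powi i), 1:])"
    and cc: "\<beta> powi cc = 1" "\<And>i. i \<in> {a..a + int k - 1} \<Longrightarrow> cc - i \<in> {a..a + int k - 1}"
  shows "(\<forall>i. coeff g i \<in> subfield_q q)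
    \<and> lead_coeff g = 1 \<and> degree g = k
    \<and> (\<forall>i\<le>k. coeff g (k - i) = coeff g i)
    \<and> mds_matrix (subfield_q q) k (companion k (\<lambda>i. coeff g i) ^\<^sub>m k)"
proof -
  have "card (UNIV :: 'a set) = 2 ^ (2 * s)" using card q by (simp add: power_mult[symmetric] mult.commute)
  then have char: "(1::'a) + 1 = 0" by (rule char2) (use assms(1) in simp)
  note gp = g_props[OF char q assms(1) bq gdef cc]
  have b0: "\<beta> \<noteq> 0"
  proof
    assume "\<beta> = 0" with bq show False by simp
  qed
  have roots: "poly g (\<beta> powi a * \<beta> ^ t) = 0" if "t < k" for t
  proof -
    have "\<beta> powi a * \<beta> ^ t = \<beta> powi (a + int t)"
      using b0 by (simp add: power_int_add power_int_of_nat)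
    moreover have "a + int t \<in> {a..a + int k - 1}" using that by auto
    ultimately show ?thesis unfolding gdef poly_prod
      by (intro prod_zero) (auto intro!: bexI[of _ "a + int t"])
  qed
  have inj: "inj_on (\<lambda>j. \<beta> ^ j) {..<2*k}"
  proof -
    have neq: "\<beta> ^ i \<noteq> \<beta> ^ j" if "i < j" "j < 2 * k" for i j
    proof
      assume h: "\<beta> ^ i = \<beta> ^ j"
      have "\<beta> ^ j = \<beta> ^ i * \<beta> ^ (j - i)" using that by (simp add: power_add[symmetric])
      then have "\<beta> ^ (j - i) = 1" using h b0 by simp
      moreover have "0 < j - i" "j - i < q + 1" using that kq by auto
      ultimately show False using ord by blast
    qed
    show ?thesis
    proof (rule inj_onI)
      fix i j assume "i \<in> {..<2*k}" "j \<in> {..<2*k}" "\<beta> ^ i = \<beta> ^ j"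
      then show "i = j" using neq[of i j] neq[of j i] by (cases i j rule: linorder_cases) auto
    qed
  qed
  have bpa: "\<beta> powi a \<noteq> 0" using b0 by (cases "a \<ge> 0") (auto simp: power_int_def)
  have F01: "0 \<in> subfield_q q" "1 \<in> subfield_q q" unfolding subfield_q_def q by auto
  have "mds_matrix (subfield_q q) k (companion k (\<lambda>i. coeff g i) ^\<^sub>m k)"
    by (rule mds_part[OF gp(3) gp(2) k1 char inj bpa roots F01])
  moreover have "\<forall>i. coeff g i \<in> subfield_q q" using gp(1) unfolding subfield_q_def by simp
  ultimately show ?thesis using gp by simp
qed

theorem mainTheorem2:
  fixes s k q :: nat and \<beta> :: "'a::{field,finite}" and g :: "'a poly"
  assumes "s \<ge> 1" and "q = 2 ^ s"
    and "card (UNIV :: 'a set) = q ^ 2"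
    and "1 \<le> k" and "2 * k \<le> q"
    and "\<beta> ^ (q + 1) = 1" and "\<forall>n. 0 < n \<and> n < q + 1 \<longrightarrow> \<beta> ^ n \<noteq> 1"
    and "g = (if even k
              then (\<Prod>i\<in>{(int q - int k) div 2 + 1 .. (int q + int k) div 2}. [:- (\<beta> powi i), 1:])
              else (\<Prod>i\<in>{- ((int k - 1) div 2) .. (int k - 1) div 2}. [:- (\<beta> powi i), 1:]))"
  shows "(\<forall>i. coeff g i \<in> subfield_q q)
    \<and> lead_coeff g = 1 \<and> degree g = k
    \<and> (\<forall>i\<le>k. coeff g (k - i) = coeff g i)
    \<and> mds_matrix (subfield_q q) k (companion k (\<lambda>i. coeff g i) ^\<^sub>m k)"
proof (cases "even k")
  case True
  obtain K where K: "k = 2 * K" using True by blast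
  obtain Q where Q: "q = 2 * Q" using assms(1,2) by (metis One_nat_def Suc_pred le_imp_less_Suc power_Suc zero_less_Suc less_Suc0 not_less)
  define a where "a = int Q - int K + 1"
  have I: "{(int q - int k) div 2 + 1 .. (int q + int k) div 2} = {a..a + int k - 1}"
  proof -
    have "(int q - int k) div 2 = int Q - int K" using K Q by simp
    moreover have "(int q + int k) div 2 = int Q + int K" using K Q by simp
    ultimately show ?thesis unfolding a_def using K by simp
  qed
  have g: "g = (\<Prod>i\<in>{a..a + int k - 1}. [:- (\<beta> powi i), 1:])" using assms(8) True I by simp
  have c1: "\<beta> powi int (q + 1) = 1" using assms(6) by (simp only: power_int_of_nat)
  have c2: "int (q + 1) - i \<in> {a..a + int k - 1}" if "i \<in> {a..a + int k - 1}" for i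
    using that K Q unfolding a_def by auto
  show ?thesis by (rule main_generic[OF assms(1-7) g c1 c2])
next
  case False
  obtain K where K: "k = 2 * K + 1" using False by (metis oddE)
  define a where "a = - int K"
  have I: "{- ((int k - 1) div 2) .. (int k - 1) div 2} = {a..a + int k - 1}"
    unfolding a_def using K by simp
  have g: "g = (\<Prod>i\<in>{a..a + int k - 1}. [:- (\<beta> powi i), 1:])" using assms(8) False I by simp
  have c1: "\<beta> powi 0 = 1" by simp
  have c2: "0 - i \<in> {a..a + int k - 1}" if "i \<in> {a..a + int k - 1}" for i
    using that K unfolding a_def by auto
  show ?thesis by (rule main_generic[OF assms(1-7) g c1 c2])
qed

end
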